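(* Let $\ell>0$ and let $M=\mathbb R\times\{x\in\mathbb R^2: (x^1)^2+(x^2)^2<\ell^2\}$ with coordinates $(t,x^1,x^2)$. Let $\lambda(x)=\log\frac{2}{1-|x|^2/\ell^2}$, $\kappa=-\lambda$, and let $\phi(t,x)$ be an arbitrary smooth function. Take the Newton-Cartan background $$\tau_\mu dx^\mu=e^{\kappa}dt,\qquad e_\mu{}^adx^\mu=e^{\lambda}dx^a,\qquad m_\mu dx^\mu=\phi\, e^{\kappa}dt,$$ and background fields $u=0$, $v=0$, and $v_\mu$ determined by $v_0=0$, $(v^1,v^2)=\tfrac32\big(x^2/\ell^2,\,-x^1/\ell^2\big)$. Then the system (S$_-$) of Theorem 1 has two linearly independent nowhere-vanishing solutions, namely $\zeta_-=\exp(\tfrac{\pi}{8}\gamma_0)\zeta_0$ for any constant Majorana spinor $\zeta_0\neq 0$.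
   Context: Conventions: $\tau^\mu,e^\mu{}_a$ are the projective inverses ($\tau^\mu\tau_\mu=1$, $\tau^\mu e_\mu{}^a=0$, $e^\mu{}_a\tau_\mu=0$, $e^\mu{}_ae_\mu{}^b=\delta^b_a$); $v_0=\tau^\mu v_\mu$, $v_a=e^\mu{}_av_\mu$, $v^a=v_a$, so $v_\mu=\tau_\mu v_0+e_\mu{}^av_a$. $\epsilon_{12}=\epsilon^{12}=1$. $\tau_{\mu\nu}=2\partial_{[\mu}\tau_{\nu]}$, $\tau_{ab}=e^\mu{}_ae^\nu{}_b\tau_{\mu\nu}$, $\tau_{0\mu}=\tau^\nu\tau_{\nu\mu}$, $\tau_\mu{}^a=\tau_{\mu\nu}e^{\nu a}$, $\tau_\mu{}^0=\tau_{0\mu}$. Spin connection $\omega_\mu{}^{ab} = 2e^{\nu[a}\partial_{[\mu}e_{\nu]}{}^{b]} - e_\mu{}^ce^{\nu a}e^{\rho b}\partial_{[\nu}e_{\rho]c} - \tau_\mu e^{\nu a}e^{\rho b}\partial_{[\nu}m_{\rho]}$. Gamma matrices: $2\times2$, $\gamma_0^2=-\mathbb1$, $\{\gamma_a,\gamma_b\}=2\delta_{ab}$, $\{\gamma_0,\gamma_a\}=0$, $\gamma^a=\gamma_a$, $\gamma^0=-\gamma_0$, $\gamma_{ab}=\epsilon_{ab}\gamma_0$, $\gamma_{a0}=\epsilon_{ab}\gamma_b$; Majorana condition $\zeta^*=\mathrm i\mathcal C_3\gamma^0\zeta$ with $\mathcal C_3^T=-\mathcal C_3$, $\gamma^T=-\mathcal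 C_3\gamma\mathcal C_3^{-1}$. $D_\mu\zeta=\partial_\mu\zeta+\tfrac14\omega_\mu{}^{ab}\gamma_{ab}\zeta$. System (S$_-$) for a commuting Majorana spinor $\zeta_-$: $(\tfrac43 v-\epsilon^{ab}\tau_{ab})\gamma_0\zeta_-=0$; $(\tfrac32\tau_\mu{}^a\gamma_{a0}+e_\mu{}^av\gamma_a+\tau_\mu v^a\gamma_a+\mathrm{Re}(u)\tau_\mu\gamma_0+\mathrm{Im}(u)\tau_\mu)\zeta_-=0$; $D_\mu\zeta_-=(\tfrac14\tau_\mu{}^0+\tfrac12v_\mu\gamma_0-\tfrac16e_\mu{}^av_b\gamma_a\gamma^b\gamma_0-\tfrac16\mathrm{Re}(u)e_\mu{}^a\gamma_a+\tfrac16\mathrm{Im}(u)e_\mu{}^a\gamma_{a0})\zeta_-$. *)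

theory Defs
  imports "HOL-Analysis.Analysis"
begin

(* Spacetime points p :: real^3 with p$0 = t, p$1 = x^1, p$2 = x^2.
   Spacetime indices mu and frame indices A range over the type 3 = {0,1,2};
   frame index 0 is the time direction, spatial frame indices a are in spat = {1,2}. *)
type_synonym pt = "real^3"
type_synonym spinor = "complex^2"
type_synonym cmat = "complex^2^2"

definition spat :: "3 set" where "spat = {1, 2}"

definition eps :: "3 \<Rightarrow> 3 \<Rightarrow> real" where
  "eps a b = (if a = 1 \<and> b = 2 then 1 else if a = 2 \<and> b = 1 then -1 else 0)"

definition pd :: "3 \<Rightarrow> (pt \<Rightarrow> 'b::real_normed_vector) \<Rightarrow> pt \<Rightarrow> 'b" where
  "pd mu f p = vector_derivative (\<lambda>s::real. f (p + s *\<^sub>R axis mu 1)) (at 0)"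

fun Ck :: "nat \<Rightarrow> pt set \<Rightarrow> (pt \<Rightarrow> real) \<Rightarrow> bool" where
  "Ck 0 U f = continuous_on U f"
| "Ck (Suc k) U f = ((\<forall>p\<in>U. f differentiable (at p)) \<and> (\<forall>mu. Ck k U (pd mu f)))"

definition smooth_on :: "pt set \<Rightarrow> (pt \<Rightarrow> real) \<Rightarrow> bool" where
  "smooth_on U f = (\<forall>k. Ck k U f)"

definition mat2 :: "complex \<Rightarrow> complex \<Rightarrow> complex \<Rightarrow> complex \<Rightarrow> cmat" where
  "mat2 a b c d = (\<chi> i j. if i = 0 then (if j = 0 then a else b) else (if j = 0 then c else d))"

definition gamma0 :: cmat where "gamma0 = mat2 0 (-1) 1 0"
definition gamma1 :: cmat where "gamma1 = mat2 0 1 1 0"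
definition gamma2 :: cmat where "gamma2 = mat2 1 0 0 (-1)"

(* lower-index gamma_A, A in {0,1,2} *)
definition gam :: "3 \<Rightarrow> cmat" where
  "gam A = (if A = 0 then gamma0 else if A = 1 then gamma1 else gamma2)"

definition gammaU0 :: cmat where "gammaU0 = - gamma0"

definition gam2 :: "3 \<Rightarrow> 3 \<Rightarrow> cmat" where
  "gam2 A B = (1/2) *\<^sub>R (gam A ** gam B - gam B ** gam A)"

definition C3 :: cmat where "C3 = mat2 0 \<i> (- \<i>) 0"

definition vconj :: "spinor \<Rightarrow> spinor" where "vconj z = (\<chi> i. cnj (z $ i))"

definition majorana :: "spinor \<Rightarrow> bool" where
  "majorana z \<longleftrightarrow> vconj z = \<i> *s ((C3 ** gammaU0) *v z)"

fun cmatpow :: "cmat \<Rightarrow> nat \<Rightarrow> cmat" where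
  "cmatpow A 0 = mat 1"
| "cmatpow A (Suc n) = A ** cmatpow A n"

definition mexp :: "cmat \<Rightarrow> cmat" where
  "mexp A = (\<Sum>n. (1 / fact n) *\<^sub>R cmatpow A n)"

(* ---------- Newton-Cartan geometry ----------
   tau p mu = tau_mu, e p mu a = e_mu^a (a in spat), m p mu = m_mu. *)
definition vielbein :: "(pt \<Rightarrow> 3 \<Rightarrow> real) \<Rightarrow> (pt \<Rightarrow> 3 \<Rightarrow> 3 \<Rightarrow> real) \<Rightarrow> pt \<Rightarrow> real^3^3" where
  "vielbein tau e p = (\<chi> A mu. if A = 0 then tau p mu else e p mu A)"

(* projective inverses: tau^mu and e^mu_a, i.e. the inverse matrix *)
definition tauU :: "(pt \<Rightarrow> 3 \<Rightarrow> real) \<Rightarrow> (pt \<Rightarrow> 3 \<Rightarrow> 3 \<Rightarrow> real) \<Rightarrow> pt \<Rightarrow> 3 \<Rightarrow> real" where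
  "tauU tau e p mu = matrix_inv (vielbein tau e p) $ mu $ 0"

definition eU :: "(pt \<Rightarrow> 3 \<Rightarrow> real) \<Rightarrow> (pt \<Rightarrow> 3 \<Rightarrow> 3 \<Rightarrow> real) \<Rightarrow> pt \<Rightarrow> 3 \<Rightarrow> 3 \<Rightarrow> real" where
  "eU tau e p mu a = matrix_inv (vielbein tau e p) $ mu $ a"

definition anti1 :: "(pt \<Rightarrow> 3 \<Rightarrow> real) \<Rightarrow> pt \<Rightarrow> 3 \<Rightarrow> 3 \<Rightarrow> real" where
  "anti1 X p mu nu = (pd mu (\<lambda>q. X q nu) p - pd nu (\<lambda>q. X q mu) p) / 2"

definition omega :: "(pt \<Rightarrow> 3 \<Rightarrow> real) \<Rightarrow> (pt \<Rightarrow> 3 \<Rightarrow> 3 \<Rightarrow> real) \<Rightarrow> (pt \<Rightarrow> 3 \<Rightarrow> real)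
    \<Rightarrow> pt \<Rightarrow> 3 \<Rightarrow> 3 \<Rightarrow> 3 \<Rightarrow> real" where
  "omega tau e m p mu a b =
     (\<Sum>nu\<in>UNIV. eU tau e p nu a * anti1 (\<lambda>q n. e q n b) p mu nu
                 - eU tau e p nu b * anti1 (\<lambda>q n. e q n a) p mu nu)
   - (\<Sum>c\<in>spat. \<Sum>nu\<in>UNIV. \<Sum>rho\<in>UNIV.
        e p mu c * eU tau e p nu a * eU tau e p rho b * anti1 (\<lambda>q n. e q n c) p nu rho)
   - tau p mu * (\<Sum>nu\<in>UNIV. \<Sum>rho\<in>UNIV. eU tau e p nu a * eU tau e p rho b * anti1 m p nu rho)"

definition tauF :: "(pt \<Rightarrow> 3 \<Rightarrow> real) \<Rightarrow> pt \<Rightarrow> 3 \<Rightarrow> 3 \<Rightarrow> real" where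
  "tauF tau p mu nu = pd mu (\<lambda>q. tau q nu) p - pd nu (\<lambda>q. tau q mu) p"

definition tauAB :: "(pt \<Rightarrow> 3 \<Rightarrow> real) \<Rightarrow> (pt \<Rightarrow> 3 \<Rightarrow> 3 \<Rightarrow> real) \<Rightarrow> pt \<Rightarrow> 3 \<Rightarrow> 3 \<Rightarrow> real" where
  "tauAB tau e p a b = (\<Sum>mu\<in>UNIV. \<Sum>nu\<in>UNIV. eU tau e p mu a * eU tau e p nu b * tauF tau p mu nu)"

definition tau0 :: "(pt \<Rightarrow> 3 \<Rightarrow> real) \<Rightarrow> (pt \<Rightarrow> 3 \<Rightarrow> 3 \<Rightarrow> real) \<Rightarrow> pt \<Rightarrow> 3 \<Rightarrow> real" where
  "tau0 tau e p mu = (\<Sum>nu\<in>UNIV. tauU tau e p nu * tauF tau p nu mu)"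

definition tauUp :: "(pt \<Rightarrow> 3 \<Rightarrow> real) \<Rightarrow> (pt \<Rightarrow> 3 \<Rightarrow> 3 \<Rightarrow> real) \<Rightarrow> pt \<Rightarrow> 3 \<Rightarrow> 3 \<Rightarrow> real" where
  "tauUp tau e p mu a = (\<Sum>nu\<in>UNIV. tauF tau p mu nu * eU tau e p nu a)"

definition vframe :: "(pt \<Rightarrow> 3 \<Rightarrow> real) \<Rightarrow> (pt \<Rightarrow> 3 \<Rightarrow> 3 \<Rightarrow> real) \<Rightarrow> (pt \<Rightarrow> 3 \<Rightarrow> real) \<Rightarrow> pt \<Rightarrow> 3 \<Rightarrow> real" where
  "vframe tau e vl p a = (\<Sum>mu\<in>UNIV. eU tau e p mu a * vl p mu)"

(* The system (S_-) on the set M for a commuting spinor field zeta;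
   v is the scalar v, vl the one-form v_mu, u the complex scalar u. *)
definition S_minus :: "pt set \<Rightarrow> (pt \<Rightarrow> 3 \<Rightarrow> real) \<Rightarrow> (pt \<Rightarrow> 3 \<Rightarrow> 3 \<Rightarrow> real) \<Rightarrow> (pt \<Rightarrow> 3 \<Rightarrow> real)
    \<Rightarrow> (pt \<Rightarrow> real) \<Rightarrow> (pt \<Rightarrow> 3 \<Rightarrow> real) \<Rightarrow> (pt \<Rightarrow> complex) \<Rightarrow> (pt \<Rightarrow> spinor) \<Rightarrow> bool" where
  "S_minus M tau e m v vl u zeta \<longleftrightarrow>
    (\<forall>p\<in>M.
      majorana (zeta p)
    \<and> (\<forall>mu. (\<lambda>s::real. zeta (p + s *\<^sub>R axis mu 1)) differentiable (at 0))
    \<and> ((4/3 * v p - (\<Sum>a\<in>spat. \<Sum>b\<in>spat. eps a b * tauAB tau e p a b)) *\<^sub>R (gamma0 *v zeta p) = 0)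
    \<and> (\<forall>mu.
         ((3/2) *\<^sub>R (\<Sum>a\<in>spat. tauUp tau e p mu a *\<^sub>R gam2 a 0)
          + (\<Sum>a\<in>spat. (e p mu a * v p) *\<^sub>R gam a)
          + (\<Sum>a\<in>spat. (tau p mu * vframe tau e vl p a) *\<^sub>R gam a)
          + (Re (u p) * tau p mu) *\<^sub>R gamma0
          + (Im (u p) * tau p mu) *\<^sub>R mat 1) *v zeta p = 0)
    \<and> (\<forall>mu.
         pd mu zeta p + (\<Sum>a\<in>spat. \<Sum>b\<in>spat. (omega tau e m p mu a b / 4) *\<^sub>R gam2 a b) *v zeta p
         = ((tau0 tau e p mu / 4) *\<^sub>R mat 1
            + (vl p mu / 2) *\<^sub>R gamma0
            - (1/6) *\<^sub>R (\<Sum>a\<in>spat. \<Sum>b\<in>spat. (e p mu a * vframe tau e vl p b) *\<^sub>R (gam a ** gam b ** gamma0))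
            - (Re (u p) / 6) *\<^sub>R (\<Sum>a\<in>spat. e p mu a *\<^sub>R gam a)
            + (Im (u p) / 6) *\<^sub>R (\<Sum>a\<in>spat. e p mu a *\<^sub>R gam2 a 0)) *v zeta p))"

definition bgM :: "real \<Rightarrow> pt set" where
  "bgM l = {p. (p $ 1)^2 + (p $ 2)^2 < l^2}"

definition bg_lam :: "real \<Rightarrow> pt \<Rightarrow> real" where
  "bg_lam l p = ln (2 / (1 - ((p $ 1)^2 + (p $ 2)^2) / l^2))"

definition bg_kappa :: "real \<Rightarrow> pt \<Rightarrow> real" where
  "bg_kappa l p = - bg_lam l p"

definition bg_tau :: "real \<Rightarrow> pt \<Rightarrow> 3 \<Rightarrow> real" where
  "bg_tau l p mu = (if mu = 0 then exp (bg_kappa l p) else 0)"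

definition bg_e :: "real \<Rightarrow> pt \<Rightarrow> 3 \<Rightarrow> 3 \<Rightarrow> real" where
  "bg_e l p mu a = (if mu = a \<and> a \<noteq> 0 then exp (bg_lam l p) else 0)"

definition bg_m :: "real \<Rightarrow> (pt \<Rightarrow> real) \<Rightarrow> pt \<Rightarrow> 3 \<Rightarrow> real" where
  "bg_m l phi p mu = (if mu = 0 then phi p * exp (bg_kappa l p) else 0)"

definition bg_vcomp :: "real \<Rightarrow> pt \<Rightarrow> 3 \<Rightarrow> real" where
  "bg_vcomp l p A = (if A = 1 then 3/2 * (p $ 2 / l^2) else if A = 2 then 3/2 * (- (p $ 1) / l^2) else 0)"

definition bg_vl :: "real \<Rightarrow> pt \<Rightarrow> 3 \<Rightarrow> real" where
  "bg_vl l p mu = bg_tau l p mu * bg_vcomp l p 0 + (\<Sum>a\<in>spat. bg_e l p mu a * bg_vcomp l p a)"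

end

theory Submission
  imports Defs
begin
lemma three0: "(3::3) = 0"
proof -
  have "of_nat CHAR(3) = (0::3)" by (rule of_nat_CHAR)
  then show ?thesis by simp
qed
lemma two0: "(2::2) = 0"
proof -
  have "of_nat CHAR(2) = (0::2)" by (rule of_nat_CHAR)
  then show ?thesis by simp
qed
lemma ex3: "(x::3) = 0 \<or> x = 1 \<or> x = 2"
  using exhaust_3[of x] three0 by auto

lemma UNIV3: "(UNIV::3 set) = {0,1,2}"
  using ex3 by blast

lemma d3: "(0::3) \<noteq> 1" "(0::3) \<noteq> 2" "(1::3) \<noteq> 2" by simp_all

lemma sum3: "sum f (UNIV::3 set) = f 0 + f 1 + f 2"
  unfolding UNIV3 by (simp add: ac_simps)

lemma ex2: "(x::2) = 0 \<or> x = 1"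
  using exhaust_2[of x] two0 by auto

lemma sum2: "sum f (UNIV::2 set) = f 0 + f 1"
  by (simp add: sum_2 two0 add.commute)

lemma spat_sum: "sum f spat = f 1 + f 2"
  unfolding spat_def by simp

lemma mat2_eq: "mat2 a b c d = mat2 a' b' c' d' \<longleftrightarrow> a = a' \<and> b = b' \<and> c = c' \<and> d = d'"
  apply (simp add: mat2_def vec_eq_iff)
  by (metis ex2 zero_neq_one)


lemma all2: "(\<forall>i::2. P i) \<longleftrightarrow> P 0 \<and> P 1"
  using ex2 by metis

lemma mat2_add: "mat2 a b c d + mat2 a' b' c' d' = mat2 (a+a') (b+b') (c+c') (d+d')"
  by (simp add: mat2_def vec_eq_iff all2)
lemma mat2_diff: "mat2 a b c d - mat2 a' b' c' d' = mat2 (a-a') (b-b') (c-c') (d-d')"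
  by (simp add: mat2_def vec_eq_iff all2)
lemma mat2_uminus: "- mat2 a b c d = mat2 (-a) (-b) (-c) (-d)"
  by (simp add: mat2_def vec_eq_iff all2)
lemma mat2_scaleR: "r *\<^sub>R mat2 a b c d = mat2 (r *\<^sub>R a) (r *\<^sub>R b) (r *\<^sub>R c) (r *\<^sub>R d)"
  by (simp add: mat2_def vec_eq_iff all2)
lemma mat2_zero: "(0::cmat) = mat2 0 0 0 0"
  by (simp add: mat2_def vec_eq_iff all2)
lemma mat2_one: "(mat 1::cmat) = mat2 1 0 0 1"
  by (simp add: mat2_def vec_eq_iff all2 mat_def)
lemma mat2_mult: "mat2 a b c d ** mat2 a' b' c' d' =
   mat2 (a*a' + b*c') (a*b' + b*d') (c*a' + d*c') (c*b' + d*d')"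
  by (simp add: mat2_def vec_eq_iff all2 matrix_matrix_mult_def sum2)
lemma mat2_mulv: "mat2 a b c d *v z = (\<chi> i. if i = 0 then a * z$0 + b * z$1 else c * z$0 + d * z$1)"
  by (simp add: mat2_def vec_eq_iff all2 matrix_vector_mult_def sum2)

lemma vec2_eq: "(z::complex^2) = w \<longleftrightarrow> z$0 = w$0 \<and> z$1 = w$1"
  by (simp add: vec_eq_iff all2)

lemmas mat2_simps = mat2_add mat2_diff mat2_uminus mat2_scaleR mat2_mult mat2_eq

lemma majorana_iff: "majorana z \<longleftrightarrow> cnj (z$0) = z$0 \<and> cnj (z$1) = z$1"
  by (simp add: majorana_def C3_def gammaU0_def gamma0_def mat2_simps mat2_mulv vconj_def vec_eq_iff all2)


lemma cmatpow_rot: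
  "cmatpow (mat2 0 (- of_real th) (of_real th) 0) n =
     mat2 (of_real (Re ((\<i> * of_real th)^n))) (- of_real (Im ((\<i> * of_real th)^n)))
          (of_real (Im ((\<i> * of_real th)^n))) (of_real (Re ((\<i> * of_real th)^n)))"
  by (induction n) (simp_all add: mat2_one mat2_mult mat2_eq)

lemma sum_mat2: "(\<Sum>i<(n::nat). mat2 (a i) (b i) (c i) (d i)) = mat2 (\<Sum>i<n. a i) (\<Sum>i<n. b i) (\<Sum>i<n. c i) (\<Sum>i<n. d i)"
  by (induction n) (simp_all add: mat2_zero mat2_add)

lemma tendsto_mat2:
  assumes "(a \<longlongrightarrow> a0) F" "(b \<longlongrightarrow> b0) F" "(c \<longlongrightarrow> c0) F" "(d \<longlongrightarrow> d0) F"
  shows "((\<lambda>n. mat2 (a n) (b n) (c n) (d n)) \<longlongrightarrow> mat2 a0 b0 c0 d0) F"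
  unfolding mat2_def
  by (intro tendsto_vec_lambda) (simp add: assms)

lemma sums_mat2:
  assumes "a sums a0" "b sums b0" "c sums c0" "d sums d0"
  shows "(\<lambda>n. mat2 (a n) (b n) (c n) (d n)) sums mat2 a0 b0 c0 d0"
  using assms unfolding sums_def sum_mat2 by (intro tendsto_mat2)

lemma mexp_rot:
  "mexp (th *\<^sub>R gamma0) = mat2 (of_real (cos th)) (- of_real (sin th)) (of_real (sin th)) (of_real (cos th))"
proof -
  define x where "x = \<i> * complex_of_real th"
  have A: "th *\<^sub>R gamma0 = mat2 0 (- of_real th) (of_real th) 0"
    unfolding gamma0_def mat2_scaleR by (simp add: scaleR_conv_of_real)
  have E: "(\<lambda>n. x^n /\<^sub>R fact n) sums exp x" by (rule exp_converges)
  have R: "(\<lambda>n. complex_of_real (Re (x^n /\<^sub>R fact n))) sums complex_of_real (cos th)"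
  proof -
    have "(\<lambda>n. Re (x^n /\<^sub>R fact n)) sums Re (exp x)" using sums_Re[OF E] .
    moreover have "Re (exp x) = cos th" by (simp add: x_def Re_exp)
    ultimately show ?thesis by (metis sums_of_real)
  qed
  have I: "(\<lambda>n. complex_of_real (Im (x^n /\<^sub>R fact n))) sums complex_of_real (sin th)"
  proof -
    have "(\<lambda>n. Im (x^n /\<^sub>R fact n)) sums Im (exp x)" using sums_Im[OF E] .
    moreover have "Im (exp x) = sin th" by (simp add: x_def Im_exp)
    ultimately show ?thesis by (metis sums_of_real)
  qed
  have I': "(\<lambda>n. - complex_of_real (Im (x^n /\<^sub>R fact n))) sums (- complex_of_real (sin th))"
    using sums_minus[OF I] .
  have T: "(\<lambda>n. (1 / fact n) *\<^sub>R cmatpow (th *\<^sub>R gamma0) n) =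
     (\<lambda>n. mat2 (complex_of_real (Re (x^n /\<^sub>R fact n))) (- complex_of_real (Im (x^n /\<^sub>R fact n)))
               (complex_of_real (Im (x^n /\<^sub>R fact n))) (complex_of_real (Re (x^n /\<^sub>R fact n))))"
    unfolding A cmatpow_rot mat2_scaleR by (simp add: x_def scaleR_conv_of_real power2_eq_square)
  show ?thesis unfolding mexp_def T
    by (rule sums_unique[symmetric], rule sums_mat2[OF R I' I R])
qed


lemma pd_real:
  assumes "((\<lambda>s. f (p + s *\<^sub>R axis mu 1)) has_real_derivative d) (at 0)"
  shows "pd mu f p = d"
  unfolding pd_def using assms
  by (simp add: has_real_derivative_iff_has_vector_derivative vector_derivative_at)

lemma deriv_kap:
  assumes "(h has_real_derivative h') (at 0)" "h 0 > 0"
  shows "((\<lambda>s. exp (- ln (2 / h s))) has_real_derivative h' / 2) (at 0)"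
proof -
  have d: "((\<lambda>s. exp (- ln (2 / h s))) has_real_derivative
        exp (- ln (2 / h 0)) * (- (inverse (2 / h 0) * (- (2 * h') / (h 0)^2)))) (at 0)"
    using assms
    by (auto intro!: derivative_eq_intros simp: power2_eq_square)
  have e: "exp (- ln (2 / h 0)) * (- (inverse (2 / h 0) * (- (2 * h') / (h 0)^2))) = h' / 2"
    using assms(2) by (simp add: exp_minus field_simps power2_eq_square)
  from d show ?thesis unfolding e .
qed

lemma deriv_lam:
  assumes "(h has_real_derivative h') (at 0)" "h 0 > 0"
  shows "((\<lambda>s. exp (ln (2 / h s))) has_real_derivative - 2 * h' / (h 0)^2) (at 0)"
proof -
  have d: "((\<lambda>s. exp (ln (2 / h s))) has_real_derivative
        exp (ln (2 / h 0)) * (inverse (2 / h 0) * (- (2 * h') / (h 0)^2))) (at 0)"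
    using assms
    by (auto intro!: derivative_eq_intros simp: power2_eq_square)
  have e: "exp (ln (2 / h 0)) * (inverse (2 / h 0) * (- (2 * h') / (h 0)^2)) = - 2 * h' / (h 0)^2"
    using assms(2) by (simp add: field_simps power2_eq_square)
  from d show ?thesis unfolding e .
qed


definition Dp :: "real \<Rightarrow> pt \<Rightarrow> real" where
  "Dp l p = 1 - ((p $ 1)^2 + (p $ 2)^2) / l^2"

lemma Dp_pos: "l > 0 \<Longrightarrow> p \<in> bgM l \<Longrightarrow> Dp l p > 0"
  by (simp add: Dp_def bgM_def)

lemma line_comp: "(p + s *\<^sub>R axis mu 1) $ i = p $ i + (if i = mu then s else 0)"
  by (simp add: axis_def)

lemma h1_deriv: "(l::real) \<noteq> 0 \<Longrightarrow> ((\<lambda>s. 1 - (((p::pt) $ 1 + s)^2 + (p $ 2)^2) / l^2) has_real_derivative - (2 * p $ 1) / l^2) (at 0)"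
  by (auto intro!: derivative_eq_intros simp: power2_eq_square field_simps)

lemma h2_deriv: "(l::real) \<noteq> 0 \<Longrightarrow> ((\<lambda>s. 1 - (((p::pt) $ 1)^2 + (p $ 2 + s)^2) / l^2) has_real_derivative - (2 * p $ 2) / l^2) (at 0)"
  by (auto intro!: derivative_eq_intros simp: power2_eq_square field_simps)

lemma exp_kap: "l > 0 \<Longrightarrow> p \<in> bgM l \<Longrightarrow> exp (bg_kappa l p) = Dp l p / 2"
  using Dp_pos[of l p] by (simp add: bg_kappa_def bg_lam_def Dp_def[symmetric] exp_minus)

lemma exp_lam: "l > 0 \<Longrightarrow> p \<in> bgM l \<Longrightarrow> exp (bg_lam l p) = 2 / Dp l p"
  using Dp_pos[of l p] by (simp add: bg_lam_def Dp_def[symmetric])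

lemma pd_kap:
  assumes "l > 0" "p \<in> bgM l"
  shows "pd mu (\<lambda>q. exp (bg_kappa l q)) p = (if mu = 0 then 0 else - (p $ mu) / l^2)"
proof -
  have D: "Dp l p > 0" using Dp_pos[OF assms] .
  have ln0: "l \<noteq> 0" using assms(1) by simp
  consider "mu = 0" | "mu = 1" | "mu = 2" using ex3 by blast
  then show ?thesis
  proof cases
    case 1
    then show ?thesis
      by (intro pd_real) (simp add: axis_def bg_kappa_def bg_lam_def)
  next
    case 2
    have "((\<lambda>s. exp (- ln (2 / (1 - ((p $ 1 + s)^2 + (p $ 2)^2) / l^2)))) has_real_derivative
           (- (2 * p $ 1) / l^2) / 2) (at 0)"
      by (rule deriv_kap[OF h1_deriv[OF ln0]]) (use D in \<open>simp add: Dp_def\<close>)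
    then show ?thesis using 2
      by (intro pd_real) (simp add: axis_def bg_kappa_def bg_lam_def)
  next
    case 3
    have "((\<lambda>s. exp (- ln (2 / (1 - ((p $ 1)^2 + (p $ 2 + s)^2) / l^2)))) has_real_derivative
           (- (2 * p $ 2) / l^2) / 2) (at 0)"
      by (rule deriv_kap[OF h2_deriv[OF ln0]]) (use D in \<open>simp add: Dp_def\<close>)
    then show ?thesis using 3
      by (intro pd_real) (simp add: axis_def bg_kappa_def bg_lam_def)
  qed
qed

lemma pd_lam:
  assumes "l > 0" "p \<in> bgM l"
  shows "pd mu (\<lambda>q. exp (bg_lam l q)) p = (if mu = 0 then 0 else 4 * (p $ mu) / (l^2 * (Dp l p)^2))"
proof -
  have D: "Dp l p > 0" using Dp_pos[OF assms] .
  have ln0: "l \<noteq> 0" using assms(1) by simp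
  consider "mu = 0" | "mu = 1" | "mu = 2" using ex3 by blast
  then show ?thesis
  proof cases
    case 1
    then show ?thesis
      by (intro pd_real) (simp add: axis_def bg_lam_def)
  next
    case 2
    have "((\<lambda>s. exp (ln (2 / (1 - ((p $ 1 + s)^2 + (p $ 2)^2) / l^2)))) has_real_derivative
           - 2 * (- (2 * p $ 1) / l^2) / (Dp l p)^2) (at 0)"
      using deriv_lam[OF h1_deriv[OF ln0]] D by (simp add: Dp_def)
    then show ?thesis using 2
      by (intro pd_real) (simp add: axis_def bg_lam_def)
  next
    case 3
    have "((\<lambda>s. exp (ln (2 / (1 - ((p $ 1)^2 + (p $ 2 + s)^2) / l^2)))) has_real_derivative
           - 2 * (- (2 * p $ 2) / l^2) / (Dp l p)^2) (at 0)"
      using deriv_lam[OF h2_deriv[OF ln0]] D by (simp add: Dp_def)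
    then show ?thesis using 3
      by (intro pd_real) (simp add: axis_def bg_lam_def)
  qed
qed


lemma matrix_inv_eq:
  fixes A :: "'a::semiring_1^'n^'n"
  assumes "A ** B = mat 1" "B ** A = mat 1"
  shows "matrix_inv A = B"
proof -
  have ex: "\<exists>A'::'a^'n^'n. A ** A' = mat 1 \<and> A' ** A = mat 1" using assms by blast
  have h: "A ** matrix_inv A = mat 1 \<and> matrix_inv A ** A = mat 1"
    unfolding matrix_inv_def by (rule someI_ex[OF ex])
  then have "matrix_inv A = matrix_inv A ** (A ** B)" using assms by simp
  also have "\<dots> = B" using h by (simp add: matrix_mul_assoc)
  finally show ?thesis .
qed

lemma pd_const: "pd mu (\<lambda>q. c) p = 0"
  by (simp add: pd_def)

lemma pd_tau:
  assumes "l > 0" "p \<in> bgM l"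
  shows "pd mu (\<lambda>q. bg_tau l q nu) p = (if nu = 0 \<and> mu \<noteq> 0 then - (p $ mu) / l^2 else 0)"
proof (cases "nu = 0")
  case True
  then have "(\<lambda>q. bg_tau l q nu) = (\<lambda>q. exp (bg_kappa l q))" by (simp add: bg_tau_def)
  then show ?thesis using pd_kap[OF assms, of mu] True by simp
next
  case False
  then have "(\<lambda>q. bg_tau l q nu) = (\<lambda>q. 0)" by (simp add: bg_tau_def)
  then show ?thesis using False by (simp add: pd_const)
qed

lemma pd_e:
  assumes "l > 0" "p \<in> bgM l"
  shows "pd mu (\<lambda>q. bg_e l q nu b) p =
     (if nu = b \<and> b \<noteq> 0 \<and> mu \<noteq> 0 then 4 * (p $ mu) / (l^2 * (Dp l p)^2) else 0)"
proof (cases "nu = b \<and> b \<noteq> 0")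
  case True
  then have "(\<lambda>q. bg_e l q nu b) = (\<lambda>q. exp (bg_lam l q))" by (simp add: bg_e_def)
  then show ?thesis using pd_lam[OF assms, of mu] True by simp
next
  case False
  then have "(\<lambda>q. bg_e l q nu b) = (\<lambda>q. 0)" by (auto simp add: bg_e_def)
  then show ?thesis using False by (auto simp add: pd_const)
qed

lemma pd_m0:
  assumes "rho \<noteq> 0"
  shows "pd mu (\<lambda>q. bg_m l phi q rho) p = 0"
proof -
  have "(\<lambda>q. bg_m l phi q rho) = (\<lambda>q. 0)" using assms by (simp add: bg_m_def)
  then show ?thesis by (simp add: pd_const)
qed

lemma all3: "(\<forall>i::3. P i) \<longleftrightarrow> P 0 \<and> P 1 \<and> P 2"
  using ex3 by metis

lemma diag_mult:
  "((\<chi> i j. if i = j then d i else 0) :: real^3^3) ** (\<chi> i j. if i = j then d' i else 0)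
    = (\<chi> i j. if i = j then d i * d' i else 0)"
  by (simp add: matrix_matrix_mult_def vec_eq_iff all3 sum3)

lemma vielbein_bg:
  assumes "l > 0" "p \<in> bgM l"
  shows "vielbein (bg_tau l) (bg_e l) p = (\<chi> i j. if i = j then (if i = 0 then Dp l p / 2 else 2 / Dp l p) else 0)"
  using assms by (simp add: vielbein_def vec_eq_iff all3 bg_tau_def bg_e_def exp_kap exp_lam)

lemma inv_bg:
  assumes "l > 0" "p \<in> bgM l"
  shows "matrix_inv (vielbein (bg_tau l) (bg_e l) p) = (\<chi> i j. if i = j then (if i = 0 then 2 / Dp l p else Dp l p / 2) else 0)"
proof -
  have D: "Dp l p > 0" using Dp_pos[OF assms] .
  have one: "(mat 1 :: real^3^3) = (\<chi> i j. if i = j then 1 else 0)" by (simp add: mat_def)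
  show ?thesis unfolding vielbein_bg[OF assms]
    by (rule matrix_inv_eq) (use D in \<open>simp_all add: diag_mult one vec_eq_iff\<close>)
qed

lemma tauU_bg:
  assumes "l > 0" "p \<in> bgM l"
  shows "tauU (bg_tau l) (bg_e l) p mu = (if mu = 0 then 2 / Dp l p else 0)"
  by (simp add: tauU_def inv_bg[OF assms])

lemma eU_bg:
  assumes "l > 0" "p \<in> bgM l"
  shows "eU (bg_tau l) (bg_e l) p mu a = (if mu = a then (if a = 0 then 2 / Dp l p else Dp l p / 2) else 0)"
  by (simp add: eU_def inv_bg[OF assms])


lemma bg_e_val: "l > 0 \<Longrightarrow> p \<in> bgM l \<Longrightarrow>
  bg_e l p mu a = (if mu = a \<and> a \<noteq> 0 then 2 / Dp l p else 0)"
  by (simp add: bg_e_def exp_lam)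

lemma bg_tau_val: "l > 0 \<Longrightarrow> p \<in> bgM l \<Longrightarrow>
  bg_tau l p mu = (if mu = 0 then Dp l p / 2 else 0)"
  by (simp add: bg_tau_def exp_kap)

lemma d3': "(1::3) \<noteq> 0" "(2::3) \<noteq> 0" "(2::3) \<noteq> 1" by simp_all

lemma omega_bg:
  assumes "l > 0" "p \<in> bgM l" "a \<in> spat" "b \<in> spat"
  shows "omega (bg_tau l) (bg_e l) (bg_m l phi) p mu a b =
    (if a = mu then 2 * p$b / (l^2 * Dp l p) else 0) - (if b = mu then 2 * p$a / (l^2 * Dp l p) else 0)"
proof -
  have D: "Dp l p > 0" using Dp_pos[OF assms(1,2)] .
  have ab: "a = 1 \<or> a = 2" "b = 1 \<or> b = 2" using assms(3,4) by (auto simp: spat_def)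
  show ?thesis
    using ab ex3[of mu] D assms(1)
    apply (simp add: omega_def anti1_def sum3 spat_sum eU_bg[OF assms(1,2)] pd_e[OF assms(1,2)]
                     pd_m0 bg_tau_val[OF assms(1,2)] bg_e_val[OF assms(1,2)] pd_const)
    apply (elim disjE; simp add: field_simps power2_eq_square)
    done
qed


context
  fixes l :: real and p :: pt
  assumes lp: "l > 0" "p \<in> bgM l"
begin

lemma tau0_bg: "tau0 (bg_tau l) (bg_e l) p mu = (if mu = 0 then 0 else 2 * p$mu / (l^2 * Dp l p))"
  using Dp_pos[OF lp] ex3[of mu]
  by (auto simp: tau0_def tauF_def sum3 tauU_bg[OF lp] pd_tau[OF lp])

lemma tauUp_bg: "a \<in> spat \<Longrightarrow> tauUp (bg_tau l) (bg_e l) p mu a = (if mu = 0 then p$a * Dp l p / (2 * l^2) else 0)"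
  using Dp_pos[OF lp] ex3[of mu]
  by (auto simp: spat_def tauUp_def tauF_def sum3 eU_bg[OF lp] pd_tau[OF lp])

lemma tauAB_bg: "a \<in> spat \<Longrightarrow> b \<in> spat \<Longrightarrow> tauAB (bg_tau l) (bg_e l) p a b = 0"
  by (auto simp: spat_def tauAB_def tauF_def sum3 eU_bg[OF lp] pd_tau[OF lp])

lemma vl_bg: "bg_vl l p mu = (if mu = 0 then 0 else 2 / Dp l p * bg_vcomp l p mu)"
  using ex3[of mu] by (auto simp: bg_vl_def spat_sum bg_e_val[OF lp] bg_tau_val[OF lp] bg_vcomp_def)

lemma vframe_bg: "b \<in> spat \<Longrightarrow> vframe (bg_tau l) (bg_e l) (bg_vl l) p b = bg_vcomp l p b"
  using Dp_pos[OF lp] by (auto simp: spat_def vframe_def sum3 eU_bg[OF lp] vl_bg)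

end


lemma spat12: "(1::3) \<in> spat" "(2::3) \<in> spat" by (simp_all add: spat_def)

lemma gam_simps: "gam 0 = gamma0" "gam 1 = gamma1" "gam 2 = gamma2"
  by (simp_all add: gam_def)

lemmas gdefs = gamma0_def gamma1_def gamma2_def mat2_one mat2_zero

lemma eq2_bg:
  assumes lp: "l > 0" "p \<in> bgM l"
  shows "((3/2) *\<^sub>R (\<Sum>a\<in>spat. tauUp (bg_tau l) (bg_e l) p mu a *\<^sub>R gam2 a 0)
          + (\<Sum>a\<in>spat. (bg_e l p mu a * 0) *\<^sub>R gam a)
          + (\<Sum>a\<in>spat. (bg_tau l p mu * vframe (bg_tau l) (bg_e l) (bg_vl l) p a) *\<^sub>R gam a)
          + (Re 0 * bg_tau l p mu) *\<^sub>R gamma0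
          + (Im 0 * bg_tau l p mu) *\<^sub>R mat 1) = 0"
  using ex3[of mu] Dp_pos[OF lp] lp(1)
  apply (simp add: spat_sum tauUp_bg[OF lp spat12(1)] tauUp_bg[OF lp spat12(2)]
        vframe_bg[OF lp spat12(1)] vframe_bg[OF lp spat12(2)] bg_tau_val[OF lp] bg_vcomp_def
        gam_simps gam2_def)
  apply (simp add: gdefs mat2_simps)
  apply (elim disjE; simp add: complex_eq_iff field_simps)
  done


lemma eq3_bg:
  assumes lp: "l > 0" "p \<in> bgM l"
  shows "(\<Sum>a\<in>spat. \<Sum>b\<in>spat. (omega (bg_tau l) (bg_e l) (bg_m l phi) p mu a b / 4) *\<^sub>R gam2 a b)
         = ((tau0 (bg_tau l) (bg_e l) p mu / 4) *\<^sub>R mat 1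
            + (bg_vl l p mu / 2) *\<^sub>R gamma0
            - (1/6) *\<^sub>R (\<Sum>a\<in>spat. \<Sum>b\<in>spat. (bg_e l p mu a * vframe (bg_tau l) (bg_e l) (bg_vl l) p b) *\<^sub>R (gam a ** gam b ** gamma0))
            - (Re 0 / 6) *\<^sub>R (\<Sum>a\<in>spat. bg_e l p mu a *\<^sub>R gam a)
            + (Im 0 / 6) *\<^sub>R (\<Sum>a\<in>spat. bg_e l p mu a *\<^sub>R gam2 a 0))"
  using ex3[of mu] Dp_pos[OF lp] lp(1)
  apply (simp add: spat_sum omega_bg[OF lp spat12(1) spat12(1)] omega_bg[OF lp spat12(1) spat12(2)]
        omega_bg[OF lp spat12(2) spat12(1)] omega_bg[OF lp spat12(2) spat12(2)]
        vframe_bg[OF lp spat12(1)] vframe_bg[OF lp spat12(2)] bg_e_val[OF lp] bg_vcomp_def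
        tau0_bg[OF lp] vl_bg[OF lp] gam_simps gam2_def)
  apply (simp add: gdefs mat2_simps)
  apply (elim disjE; simp add: complex_eq_iff field_simps)
  done

lemma eq1_bg:
  assumes lp: "l > 0" "p \<in> bgM l"
  shows "(4/3 * 0 - (\<Sum>a\<in>spat. \<Sum>b\<in>spat. eps a b * tauAB (bg_tau l) (bg_e l) p a b)) *\<^sub>R (gamma0 *v z) = 0"
  by (simp add: spat_sum tauAB_bg[OF lp spat12(1) spat12(1)] tauAB_bg[OF lp spat12(1) spat12(2)]
        tauAB_bg[OF lp spat12(2) spat12(1)] tauAB_bg[OF lp spat12(2) spat12(2)])


lemma mv_scaleR: "(A::cmat) *v (r *\<^sub>R x) = r *\<^sub>R (A *v x)"
  by (simp add: vec_eq_iff matrix_vector_mult_def scaleR_sum_right)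

lemma R_inj:
  assumes "mexp ((pi / 8) *\<^sub>R gamma0) *v w = 0"
  shows "w = 0"
proof -
  define c where "c = complex_of_real (cos (pi/8))"
  define s where "s = complex_of_real (sin (pi/8))"
  have cs: "c * c + s * s = 1"
    unfolding c_def s_def by (metis of_real_add of_real_mult of_real_1 sin_cos_squared_add power2_eq_square add.commute)
  have R: "mexp ((pi / 8) *\<^sub>R gamma0) = mat2 c (- s) s c" by (simp add: mexp_rot c_def s_def)
  have "mat2 c s (- s) c ** mat2 c (- s) s c = mat 1"
    using cs by (simp add: mat2_mult mat2_one mat2_eq algebra_simps)
  then have "w = (mat2 c s (- s) c ** mexp ((pi / 8) *\<^sub>R gamma0)) *v w" by (simp add: R)
  also have "\<dots> = 0" by (simp add: matrix_vector_mul_assoc[symmetric] assms)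
  finally show ?thesis .
qed

lemma R_majorana:
  assumes "majorana z"
  shows "majorana (mexp ((pi / 8) *\<^sub>R gamma0) *v z)"
  using assms by (simp add: majorana_iff mexp_rot mat2_mulv)

lemma zero_in_bgM: "l > 0 \<Longrightarrow> (0::pt) \<in> bgM l"
  by (simp add: bgM_def)

theorem mainTheorem5:
  fixes l :: real and phi :: "pt \<Rightarrow> real"
  assumes "l > 0"
    and "smooth_on (bgM l) phi"
  shows "(\<forall>z0. majorana z0 \<and> z0 \<noteq> 0 \<longrightarrow>
            S_minus (bgM l) (bg_tau l) (bg_e l) (bg_m l phi) (\<lambda>p. 0) (bg_vl l) (\<lambda>p. 0)
                    (\<lambda>p. mexp ((pi / 8) *\<^sub>R gamma0) *v z0)
          \<and> (\<forall>p\<in>bgM l. mexp ((pi / 8) *\<^sub>R gamma0) *v z0 \<noteq> 0))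
       \<and> (\<exists>za zb. majorana za \<and> majorana zb \<and> za \<noteq> 0 \<and> zb \<noteq> 0 \<and>
            (\<forall>c1 c2 :: real.
               (\<forall>p\<in>bgM l. c1 *\<^sub>R (mexp ((pi / 8) *\<^sub>R gamma0) *v za)
                          + c2 *\<^sub>R (mexp ((pi / 8) *\<^sub>R gamma0) *v zb) = 0)
               \<longrightarrow> c1 = 0 \<and> c2 = 0))"
proof (intro conjI allI impI)
  fix z0 assume z0: "majorana z0 \<and> z0 \<noteq> 0"
  show "\<forall>p\<in>bgM l. mexp ((pi / 8) *\<^sub>R gamma0) *v z0 \<noteq> 0"
    using z0 R_inj by blast
  show "S_minus (bgM l) (bg_tau l) (bg_e l) (bg_m l phi) (\<lambda>p. 0) (bg_vl l) (\<lambda>p. 0)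
                    (\<lambda>p. mexp ((pi / 8) *\<^sub>R gamma0) *v z0)"
    unfolding S_minus_def
  proof (intro ballI conjI allI)
    fix p assume p: "p \<in> bgM l"
    note lp = assms(1) p
    show "majorana (mexp ((pi / 8) *\<^sub>R gamma0) *v z0)" using z0 R_majorana by blast
    fix mu
    show "(\<lambda>s::real. mexp ((pi / 8) *\<^sub>R gamma0) *v z0) differentiable (at 0)" by simp
    show "(4/3 * 0 - (\<Sum>a\<in>spat. \<Sum>b\<in>spat. eps a b * tauAB (bg_tau l) (bg_e l) p a b)) *\<^sub>R
            (gamma0 *v (mexp ((pi / 8) *\<^sub>R gamma0) *v z0)) = 0"
      by (rule eq1_bg[OF lp])
    show "((3/2) *\<^sub>R (\<Sum>a\<in>spat. tauUp (bg_tau l) (bg_e l) p mu a *\<^sub>R gam2 a 0)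
          + (\<Sum>a\<in>spat. (bg_e l p mu a * 0) *\<^sub>R gam a)
          + (\<Sum>a\<in>spat. (bg_tau l p mu * vframe (bg_tau l) (bg_e l) (bg_vl l) p a) *\<^sub>R gam a)
          + (Re 0 * bg_tau l p mu) *\<^sub>R gamma0
          + (Im 0 * bg_tau l p mu) *\<^sub>R mat 1) *v (mexp ((pi / 8) *\<^sub>R gamma0) *v z0) = 0"
      unfolding eq2_bg[OF lp] by simp
    show "pd mu (\<lambda>p. mexp ((pi / 8) *\<^sub>R gamma0) *v z0) p
          + (\<Sum>a\<in>spat. \<Sum>b\<in>spat. (omega (bg_tau l) (bg_e l) (bg_m l phi) p mu a b / 4) *\<^sub>R gam2 a b)
             *v (mexp ((pi / 8) *\<^sub>R gamma0) *v z0)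
         = ((tau0 (bg_tau l) (bg_e l) p mu / 4) *\<^sub>R mat 1
            + (bg_vl l p mu / 2) *\<^sub>R gamma0
            - (1/6) *\<^sub>R (\<Sum>a\<in>spat. \<Sum>b\<in>spat. (bg_e l p mu a * vframe (bg_tau l) (bg_e l) (bg_vl l) p b) *\<^sub>R (gam a ** gam b ** gamma0))
            - (Re 0 / 6) *\<^sub>R (\<Sum>a\<in>spat. bg_e l p mu a *\<^sub>R gam a)
            + (Im 0 / 6) *\<^sub>R (\<Sum>a\<in>spat. bg_e l p mu a *\<^sub>R gam2 a 0))
             *v (mexp ((pi / 8) *\<^sub>R gamma0) *v z0)"
      unfolding eq3_bg[OF lp] pd_const by simp
  qed
next
  define za :: spinor where "za = (\<chi> i. if i = 0 then 1 else 0)"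
  define zb :: spinor where "zb = (\<chi> i. if i = 0 then 0 else 1)"
  have maj: "majorana za" "majorana zb" by (simp_all add: majorana_iff za_def zb_def)
  have nz: "za \<noteq> 0" "zb \<noteq> 0" by (auto simp: za_def zb_def vec2_eq)
  have li: "c1 = 0 \<and> c2 = 0"
    if h: "\<forall>p\<in>bgM l. c1 *\<^sub>R (mexp ((pi / 8) *\<^sub>R gamma0) *v za)
                          + c2 *\<^sub>R (mexp ((pi / 8) *\<^sub>R gamma0) *v zb) = 0" for c1 c2 :: real
  proof -
    have "c1 *\<^sub>R (mexp ((pi / 8) *\<^sub>R gamma0) *v za) + c2 *\<^sub>R (mexp ((pi / 8) *\<^sub>R gamma0) *v zb) = 0"
      using h zero_in_bgM[OF assms(1)] by blast
    then have "mexp ((pi / 8) *\<^sub>R gamma0) *v (c1 *\<^sub>R za + c2 *\<^sub>R zb) = 0"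
      by (simp add: mv_scaleR matrix_vector_right_distrib)
    then have "c1 *\<^sub>R za + c2 *\<^sub>R zb = 0" by (rule R_inj)
    then show ?thesis by (simp add: vec2_eq za_def zb_def)
  qed
  show "\<exists>za zb. majorana za \<and> majorana zb \<and> za \<noteq> 0 \<and> zb \<noteq> 0 \<and>
            (\<forall>c1 c2 :: real.
               (\<forall>p\<in>bgM l. c1 *\<^sub>R (mexp ((pi / 8) *\<^sub>R gamma0) *v za)
                          + c2 *\<^sub>R (mexp ((pi / 8) *\<^sub>R gamma0) *v zb) = 0)
               \<longrightarrow> c1 = 0 \<and> c2 = 0)"
    using maj nz li by blast
qed

end
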